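(* Let $1\le p,q<\infty$, let $\nu$ be a modulus of variation, $\phi$ an Orlicz function and $w=\{w_j\}$ a weight sequence. Then (i) $\ell_\phi\hookrightarrow m(\nu,p)$ iff $\limsup_{n\to\infty}\frac1{\nu(n)}\max_{1\le k\le n}k^{1/p}\phi^{-1}(1/k)<\infty$; (ii) $d(w,q)\hookrightarrow m(\nu,p)$ iff $\limsup_{n\to\infty}\frac1{\nu(n)}\max_{1\le k\le n}k^{1/p}\big(\sum_{j=1}^kw_j\big)^{-1/q}<\infty$.
   Context: A modulus of variation is a nondecreasing concave sequence of positive numbers. An Orlicz function is a continuous convex $\phi$ on $[0,\infty)$ with $\phi(x)>0$ for $x>0$, $\phi(x)/x\to0$ as $x\to0^+$ and $\phi(x)/x\to\infty$ as $x\to\infty$. A weight sequence is a nonincreasing sequence of positive numbers belonging to $c_0\setminus\ell_1$. For a real sequence $x$, $x^*$ is the nonincreasing rearrangement of $\{|x_j|\}$. $\ell_\phi$: sequences with $\|x\|=\inf\{c>0:\sum_j\phi(|x_j|/c)\le1\}<\infty$. $d(w,q)$: sequences with $\|x\|=(\sum_j(x_j^* )^qw_j)^{1/q}<\infty$. $m(\nu,p)$: sequences with $\|x\|=\sup_{n}\frac1{\nu(n)}(\sum_{j=1}^n(x_j^* )^p)^{1/p}<\infty$. *)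

theory Defs
  imports "HOL-Analysis.Analysis"
begin

text \<open>Conventions: real sequences are functions nat => real; the paper's index j >= 1
  corresponds to the Isabelle index j - 1 (so x_1 is x 0). The modulus of variation nu is
  indexed as in the paper, i.e. only its values at n >= 1 matter.\<close>

definition modulus_of_variation :: "(nat \<Rightarrow> real) \<Rightarrow> bool" where
  "modulus_of_variation \<nu> \<longleftrightarrow>
     (\<forall>n\<ge>1. 0 < \<nu> n) \<and> (\<forall>n\<ge>1. \<nu> n \<le> \<nu> (Suc n)) \<and>
     (\<forall>n\<ge>1. \<nu> n + \<nu> (n + 2) \<le> 2 * \<nu> (Suc n))"

definition orlicz_function :: "(real \<Rightarrow> real) \<Rightarrow> bool" where
  "orlicz_function \<phi> \<longleftrightarrow>
     continuous_on {0..} \<phi> \<and> convex_on {0..} \<phi> \<and> (\<forall>x>0. \<phi> x > 0) \<and>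
     ((\<lambda>x. \<phi> x / x) \<longlongrightarrow> 0) (at_right 0) \<and>
     filterlim (\<lambda>x. \<phi> x / x) at_top at_top"

definition weight_sequence :: "(nat \<Rightarrow> real) \<Rightarrow> bool" where
  "weight_sequence w \<longleftrightarrow> (\<forall>j. 0 < w j) \<and> decseq w \<and> w \<longlonglongrightarrow> 0 \<and> \<not> summable w"

definition orlicz_inv :: "(real \<Rightarrow> real) \<Rightarrow> real \<Rightarrow> real" where
  "orlicz_inv \<phi> = inv_into {0..} \<phi>"

text \<open>Nonincreasing rearrangement (0-based: decr_rearr x n is the paper's x*_(n+1)),
  x*_(n+1) = inf { t >= 0 : #{j. |x_j| > t} <= n }, meaningful for bounded x.\<close>
definition decr_rearr :: "(nat \<Rightarrow> real) \<Rightarrow> nat \<Rightarrow> real" where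
  "decr_rearr x n = Inf {t. 0 \<le> t \<and> finite {j. \<bar>x j\<bar> > t} \<and> card {j. \<bar>x j\<bar> > t} \<le> n}"

definition in_orlicz :: "(real \<Rightarrow> real) \<Rightarrow> (nat \<Rightarrow> real) \<Rightarrow> bool" where
  "in_orlicz \<phi> x \<longleftrightarrow> (\<exists>c>0. summable (\<lambda>j. \<phi> (\<bar>x j\<bar> / c)) \<and> (\<Sum>j. \<phi> (\<bar>x j\<bar> / c)) \<le> 1)"

definition orlicz_norm :: "(real \<Rightarrow> real) \<Rightarrow> (nat \<Rightarrow> real) \<Rightarrow> real" where
  "orlicz_norm \<phi> x = Inf {c. c > 0 \<and> summable (\<lambda>j. \<phi> (\<bar>x j\<bar> / c)) \<and> (\<Sum>j. \<phi> (\<bar>x j\<bar> / c)) \<le> 1}"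

definition in_lorentz :: "(nat \<Rightarrow> real) \<Rightarrow> real \<Rightarrow> (nat \<Rightarrow> real) \<Rightarrow> bool" where
  "in_lorentz w q x \<longleftrightarrow> bounded (range x) \<and> summable (\<lambda>j. decr_rearr x j powr q * w j)"

definition lorentz_norm :: "(nat \<Rightarrow> real) \<Rightarrow> real \<Rightarrow> (nat \<Rightarrow> real) \<Rightarrow> real" where
  "lorentz_norm w q x = (\<Sum>j. decr_rearr x j powr q * w j) powr (1 / q)"

definition mseq_term :: "(nat \<Rightarrow> real) \<Rightarrow> real \<Rightarrow> (nat \<Rightarrow> real) \<Rightarrow> nat \<Rightarrow> real" where
  "mseq_term \<nu> p x n = (\<Sum>j<n. decr_rearr x j powr p) powr (1 / p) / \<nu> n"

definition in_marc :: "(nat \<Rightarrow> real) \<Rightarrow> real \<Rightarrow> (nat \<Rightarrow> real) \<Rightarrow> bool" where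
  "in_marc \<nu> p x \<longleftrightarrow> bounded (range x) \<and> bdd_above (mseq_term \<nu> p x ` {1..})"

definition marc_norm :: "(nat \<Rightarrow> real) \<Rightarrow> real \<Rightarrow> (nat \<Rightarrow> real) \<Rightarrow> real" where
  "marc_norm \<nu> p x = (SUP n\<in>{1..}. mseq_term \<nu> p x n)"

definition embeds ::
  "((nat \<Rightarrow> real) \<Rightarrow> bool) \<Rightarrow> ((nat \<Rightarrow> real) \<Rightarrow> real) \<Rightarrow>
   ((nat \<Rightarrow> real) \<Rightarrow> bool) \<Rightarrow> ((nat \<Rightarrow> real) \<Rightarrow> real) \<Rightarrow> bool" where
  "embeds X nX Y nY \<longleftrightarrow> (\<exists>C. \<forall>x. X x \<longrightarrow> Y x \<and> nY x \<le> C * nX x)"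

end

theory Submission
  imports Defs
begin


lemma orl_zero:
  assumes "orlicz_function \<phi>" shows "\<phi> 0 = 0"
proof -
  from assms have c: "continuous_on {0..} \<phi>" and l: "((\<lambda>x. \<phi> x / x) \<longlongrightarrow> 0) (at_right 0)"
    by (auto simp: orlicz_function_def)
  have "((\<lambda>x. \<phi> x / x * x) \<longlongrightarrow> 0 * 0) (at_right 0)"
    by (intro tendsto_mult l) (simp add: tendsto_ident_at)
  then have "((\<lambda>x. \<phi> x / x * x) \<longlongrightarrow> 0) (at_right 0)" by simp
  moreover have "\<forall>\<^sub>F x in at_right 0. \<phi> x / x * x = \<phi> x"
    by (rule eventually_mono[OF eventually_at_right_less]) simp
  ultimately have 1: "(\<phi> \<longlongrightarrow> 0) (at_right (0::real))"
    using Lim_transform_eventually by fastforce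
  have "(\<phi> \<longlongrightarrow> \<phi> 0) (at 0 within {0..})" using c by (simp add: continuous_on_def)
  then have 2: "(\<phi> \<longlongrightarrow> \<phi> 0) (at_right (0::real))"
    by (rule tendsto_within_subset) auto
  show ?thesis using tendsto_unique[OF _ 2 1] by simp
qed

lemma orl_scale:
  assumes "orlicz_function \<phi>" "0 \<le> x" "x \<le> y" "0 < y"
  shows "\<phi> x \<le> (x / y) * \<phi> y"
proof -
  have cv: "convex_on {0..} \<phi>" using assms(1) by (simp add: orlicz_function_def)
  have "\<phi> ((1 - x/y) *\<^sub>R 0 + (x/y) *\<^sub>R y) \<le> (1 - x/y) * \<phi> 0 + (x/y) * \<phi> y"
    by (rule convex_onD[OF cv]) (use assms in auto)
  then show ?thesis using assms orl_zero[OF assms(1)] by simp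
qed

lemma orl_strict:
  assumes "orlicz_function \<phi>" "0 \<le> x" "x < y"
  shows "\<phi> x < \<phi> y"
proof -
  have py: "\<phi> y > 0" using assms by (auto simp: orlicz_function_def)
  have "\<phi> x \<le> (x / y) * \<phi> y" using orl_scale assms by simp
  also have "\<dots> < \<phi> y" using assms py by (simp add: field_simps)
  finally show ?thesis .
qed

lemma orl_mono:
  assumes "orlicz_function \<phi>" "0 \<le> x" "x \<le> y"
  shows "\<phi> x \<le> \<phi> y"
  using orl_strict[OF assms(1,2)] assms(3) by (metis dual_order.order_iff_strict less_imp_le)

lemma orl_nonneg:
  assumes "orlicz_function \<phi>" "0 \<le> x" shows "0 \<le> \<phi> x"
  using orl_mono[OF assms(1) order_refl assms(2)] orl_zero[OF assms(1)] by simp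

lemma orl_inj: "orlicz_function \<phi> \<Longrightarrow> inj_on \<phi> {0..}"
  by (rule inj_onI) (metis atLeast_iff linorder_neq_iff orl_strict less_irrefl)

lemma orl_surj:
  assumes "orlicz_function \<phi>" "0 \<le> y"
  shows "y \<in> \<phi> ` {0..}"
proof -
  have c: "continuous_on {0..} \<phi>" and f: "filterlim (\<lambda>x. \<phi> x / x) at_top at_top"
    using assms by (auto simp: orlicz_function_def)
  from f have "\<forall>\<^sub>F x in at_top. 1 \<le> \<phi> x / x" by (simp add: filterlim_at_top)
  then obtain N where N: "\<And>x. x \<ge> N \<Longrightarrow> 1 \<le> \<phi> x / x" by (auto simp: eventually_at_top_linorder)
  define b where "b = max N (max y 1)"
  have "N \<le> b" by (simp add: b_def)
  then have "1 \<le> \<phi> b / b" using N by simp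
  then have "b \<le> \<phi> b" using b_def by (simp add: field_simps)
  then have yb: "y \<le> \<phi> b" using b_def by simp
  have "\<exists>x\<ge>0. x \<le> b \<and> \<phi> x = y"
    by (rule IVT') (use orl_zero[OF assms(1)] assms yb b_def in
        \<open>auto intro: continuous_on_subset[OF c]\<close>)
  then show ?thesis by auto
qed

lemma orl_inv:
  assumes "orlicz_function \<phi>" "0 \<le> y"
  shows "0 \<le> orlicz_inv \<phi> y" "\<phi> (orlicz_inv \<phi> y) = y"
  using orl_surj[OF assms] inv_into_into[of y \<phi> "{0..}"]
  by (auto simp: orlicz_inv_def f_inv_into_f)

lemma orl_inv_f:
  assumes "orlicz_function \<phi>" "0 \<le> x"
  shows "orlicz_inv \<phi> (\<phi> x) = x"
  using inv_into_f_f[OF orl_inj[OF assms(1)]] assms by (simp add: orlicz_inv_def)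

lemma orl_inv_mono:
  assumes "orlicz_function \<phi>" "0 \<le> y" "y \<le> y'"
  shows "orlicz_inv \<phi> y \<le> orlicz_inv \<phi> y'"
proof (rule ccontr)
  assume "\<not> ?thesis"
  then have "\<phi> (orlicz_inv \<phi> y') < \<phi> (orlicz_inv \<phi> y)"
    using orl_strict[OF assms(1), of "orlicz_inv \<phi> y'" "orlicz_inv \<phi> y"] orl_inv[OF assms(1)] assms by simp
  then show False using orl_inv[OF assms(1)] assms by simp
qed



lemma dr_mem:
  fixes x :: "nat \<Rightarrow> real"
  assumes "bounded (range x)"
  shows "\<exists>B\<ge>0. (\<forall>i. \<bar>x i\<bar> \<le> B) \<and> B \<in> {t. 0 \<le> t \<and> finite {j. \<bar>x j\<bar> > t} \<and> card {j. \<bar>x j\<bar> > t} \<le> n}"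
proof -
  obtain B where B: "\<And>i. norm (x i) \<le> B" using assms by (auto simp: bounded_iff)
  have B0: "0 \<le> B" using B[of 0] by simp
  have "{j. \<bar>x j\<bar> > B} = {}" using B by (auto simp: not_less)
  then show ?thesis using B B0 by (intro exI[of _ B]) auto
qed

lemma dr_nonneg: "bounded (range x) \<Longrightarrow> 0 \<le> decr_rearr x n"
  unfolding decr_rearr_def
  by (rule cInf_greatest) (use dr_mem[of x n] in auto)

lemma dr_le:
  assumes "0 \<le> t" "finite {j. \<bar>x j\<bar> > t}" "card {j. \<bar>x j\<bar> > t} \<le> n"
  shows "decr_rearr x n \<le> t"
  unfolding decr_rearr_def
  by (rule cInf_lower) (use assms in \<open>auto simp: bdd_below_def\<close>)

lemma dr_lt:
  assumes "0 \<le> t" "t < decr_rearr x n"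
  shows "infinite {j. \<bar>x j\<bar> > t} \<or> n < card {j. \<bar>x j\<bar> > t}"
  using dr_le[of t x n] assms by linarith

lemma dr_ge:
  assumes "bounded (range x)"
    "\<And>t. 0 \<le> t \<Longrightarrow> finite {j. \<bar>x j\<bar> > t} \<Longrightarrow> card {j. \<bar>x j\<bar> > t} \<le> n \<Longrightarrow> a \<le> t"
  shows "a \<le> decr_rearr x n"
  unfolding decr_rearr_def
  by (rule cInf_greatest) (use dr_mem[OF assms(1), of n] assms(2) in auto)

lemma dr_antimono:
  assumes "bounded (range x)" "m \<le> n"
  shows "decr_rearr x n \<le> decr_rearr x m"
  unfolding decr_rearr_def
  by (rule cInf_superset_mono) (use dr_mem[OF assms(1), of m] assms(2) in \<open>auto simp: bdd_below_def\<close>)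

lemma dr_ind:
  assumes "0 < a"
  shows "decr_rearr (\<lambda>i. if i < k then a else 0) j = (if j < k then a else 0)"
proof -
  let ?x = "\<lambda>i::nat. if i < k then a else (0::real)"
  have bd: "bounded (range ?x)"
    by (rule boundedI[of _ a]) (use assms in auto)
  have S0: "{i. \<bar>?x i\<bar> > t} = {..<k}" if "0 \<le> t" "t < a" for t
    using that by auto
  have Sa: "{i. \<bar>?x i\<bar> > a} = {}" using assms by auto
  show ?thesis
  proof (cases "j < k")
    case True
    have "a \<le> decr_rearr ?x j"
    proof (rule dr_ge[OF bd])
      fix t :: real assume t: "0 \<le> t" "finite {i. \<bar>?x i\<bar> > t}" "card {i. \<bar>?x i\<bar> > t} \<le> j"
      show "a \<le> t"
      proof (rule ccontr)
        assume "\<not> a \<le> t"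
        then have "card {i. \<bar>?x i\<bar> > t} = k" using S0[of t] t by simp
        then show False using t True by simp
      qed
    qed
    moreover have "decr_rearr ?x j \<le> a" by (rule dr_le) (use Sa assms in auto)
    ultimately show ?thesis using True by simp
  next
    case False
    have "decr_rearr ?x j \<le> 0" by (rule dr_le) (use S0[of 0] assms False in auto)
    then show ?thesis using dr_nonneg[OF bd, of j] False by simp
  qed
qed



lemma dr_inj:
  fixes x :: "nat \<Rightarrow> real"
  assumes "0 < \<theta>" "\<theta> < 1"
  shows "\<exists>f. inj_on f {..<n} \<and> (\<forall>j<n. 0 < decr_rearr x j \<longrightarrow> \<theta> * decr_rearr x j < \<bar>x (f j)\<bar>)"
proof (induction n)
  case 0
  then show ?case by auto
next
  case (Suc n)
  then obtain f where f: "inj_on f {..<n}" "\<forall>j<n. 0 < decr_rearr x j \<longrightarrow> \<theta> * decr_rearr x j < \<bar>x (f j)\<bar>"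
    by blast
  let ?F = "f ` {..<n}"
  have finF: "finite ?F" by simp
  have cF: "card ?F \<le> n" using card_image_le[of "{..<n}" f] by simp
  obtain i where i: "i \<notin> ?F" "0 < decr_rearr x n \<longrightarrow> \<theta> * decr_rearr x n < \<bar>x i\<bar>"
  proof (cases "0 < decr_rearr x n")
    case True
    let ?S = "{j. \<bar>x j\<bar> > \<theta> * decr_rearr x n}"
    have "\<theta> * decr_rearr x n < decr_rearr x n" using True assms by simp
    then have "infinite ?S \<or> n < card ?S" using dr_lt[of "\<theta> * decr_rearr x n" x n] True assms by simp
    then have "\<exists>i\<in>?S. i \<notin> ?F"
    proof
      assume "infinite ?S"
      then have "infinite (?S - ?F)" using finF by (rule Diff_infinite_finite[rotated])
      then have "?S - ?F \<noteq> {}" by (rule infinite_imp_nonempty)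
      then show ?thesis by blast
    next
      assume ns: "n < card ?S"
      have "\<not> ?S \<subseteq> ?F"
      proof
        assume "?S \<subseteq> ?F"
        then have "card ?S \<le> card ?F" by (rule card_mono[OF finF])
        then show False using cF ns by simp
      qed
      then show ?thesis by blast
    qed
    then show ?thesis using that by blast
  next
    case False
    obtain i where "i \<notin> ?F" using ex_new_if_finite[OF infinite_UNIV_nat finF] by blast
    then show ?thesis using that False by blast
  qed
  define f' where "f' = f(n := i)"
  have "inj_on f' {..<Suc n}"
  proof -
    have "inj_on f' {..<n}" using f(1) unfolding f'_def by (simp add: inj_on_def)
    moreover have "f' n \<notin> f' ` {..<n}" using i(1) unfolding f'_def by auto
    ultimately show ?thesis by (simp add: lessThan_Suc)
  qed
  moreover have "\<forall>j<Suc n. 0 < decr_rearr x j \<longrightarrow> \<theta> * decr_rearr x j < \<bar>x (f' j)\<bar>"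
    using f(2) i(2) unfolding f'_def by (auto simp: less_Suc_eq)
  ultimately show ?case by blast
qed

lemma dr_sum_le:
  fixes x :: "nat \<Rightarrow> real" and g :: "real \<Rightarrow> real"
  assumes bd: "bounded (range x)" and g0: "g 0 = 0"
    and gm: "\<And>a b. 0 \<le> a \<Longrightarrow> a \<le> b \<Longrightarrow> g a \<le> g b"
    and gc: "continuous_on {0..} g" and sm: "summable (\<lambda>i. g \<bar>x i\<bar>)"
  shows "(\<Sum>j<n. g (decr_rearr x j)) \<le> (\<Sum>i. g \<bar>x i\<bar>)"
proof -
  have key: "(\<Sum>j<n. g (\<theta> * decr_rearr x j)) \<le> (\<Sum>i. g \<bar>x i\<bar>)" if th: "0 < \<theta>" "\<theta> < 1" for \<theta>
  proof -
    obtain f where f: "inj_on f {..<n}" "\<forall>j<n. 0 < decr_rearr x j \<longrightarrow> \<theta> * decr_rearr x j < \<bar>x (f j)\<bar>"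
      using dr_inj[OF th] by blast
    have "(\<Sum>j<n. g (\<theta> * decr_rearr x j)) \<le> (\<Sum>j<n. g \<bar>x (f j)\<bar>)"
    proof (rule sum_mono)
      fix j assume j: "j \<in> {..<n}"
      have d0: "0 \<le> decr_rearr x j" using dr_nonneg[OF bd] .
      show "g (\<theta> * decr_rearr x j) \<le> g \<bar>x (f j)\<bar>"
      proof (cases "0 < decr_rearr x j")
        case True
        then show ?thesis using f(2) j th d0 by (intro gm) auto
      next
        case False
        then have "decr_rearr x j = 0" using d0 by simp
        then show ?thesis using gm[of 0 "\<bar>x (f j)\<bar>"] g0 by simp
      qed
    qed
    also have "\<dots> = sum (\<lambda>i. g \<bar>x i\<bar>) (f ` {..<n})"
      using sum.reindex[OF f(1), of "\<lambda>i. g \<bar>x i\<bar>"] by simp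
    also have "\<dots> \<le> (\<Sum>i. g \<bar>x i\<bar>)"
      by (rule sum_le_suminf[OF sm]) (use gm[of 0] g0 in auto)
    finally show ?thesis .
  qed
  define th where "th m = 1 - inverse (real (Suc m))" for m
  have thl: "th \<longlonglongrightarrow> 1"
    unfolding th_def using tendsto_diff[OF tendsto_const LIMSEQ_inverse_real_of_nat, of 1] by simp
  have "(\<lambda>m. \<Sum>j<n. g (th m * decr_rearr x j)) \<longlonglongrightarrow> (\<Sum>j<n. g (1 * decr_rearr x j))"
  proof (intro tendsto_sum)
    fix j
    show "(\<lambda>m. g (th m * decr_rearr x j)) \<longlonglongrightarrow> g (1 * decr_rearr x j)"
    proof (rule continuous_on_tendsto_compose[OF gc])
      show "(\<lambda>m. th m * decr_rearr x j) \<longlonglongrightarrow> 1 * decr_rearr x j"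
        by (intro tendsto_mult thl tendsto_const)
      show "1 * decr_rearr x j \<in> {0..}" using dr_nonneg[OF bd] by simp
      have "th m \<ge> 0" for m unfolding th_def by (simp add: field_simps)
      then show "\<forall>\<^sub>F m in sequentially. th m * decr_rearr x j \<in> {0..}"
        using dr_nonneg[OF bd] by simp
    qed
  qed
  then have lim: "(\<lambda>m. \<Sum>j<n. g (th m * decr_rearr x j)) \<longlonglongrightarrow> (\<Sum>j<n. g (decr_rearr x j))" by simp
  show ?thesis
  proof (rule LIMSEQ_le_const2[OF lim])
    show "\<exists>N. \<forall>m\<ge>N. (\<Sum>j<n. g (th m * decr_rearr x j)) \<le> (\<Sum>i. g \<bar>x i\<bar>)"
    proof (intro exI allI impI)
      fix m :: nat assume "1 \<le> m"
      then have "0 < th m" "th m < 1" unfolding th_def by (auto simp: field_simps)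
      then show "(\<Sum>j<n. g (th m * decr_rearr x j)) \<le> (\<Sum>i. g \<bar>x i\<bar>)" by (rule key)
    qed
  qed
qed



lemma marc_ge: "in_marc \<nu> p x \<Longrightarrow> 1 \<le> n \<Longrightarrow> mseq_term \<nu> p x n \<le> marc_norm \<nu> p x"
  unfolding in_marc_def marc_norm_def by (intro cSUP_upper) auto

lemma marc_le: "(\<And>n. 1 \<le> n \<Longrightarrow> mseq_term \<nu> p x n \<le> B) \<Longrightarrow> marc_norm \<nu> p x \<le> B"
  unfolding marc_norm_def by (intro cSUP_least) auto

lemma limsup_lt:
  assumes "\<And>n. 1 \<le> n \<Longrightarrow> f n \<le> K"
  shows "limsup (\<lambda>n. ereal (f n)) < \<infinity>"
proof -
  have "\<forall>\<^sub>F n in sequentially. ereal (f n) \<le> ereal K"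
    unfolding eventually_at_top_linorder using assms by (intro exI[of _ 1]) simp
  then have "limsup (\<lambda>n. ereal (f n)) \<le> ereal K" by (rule Limsup_bounded)
  then show ?thesis by (rule order.strict_trans1) simp
qed

lemma orlicz_norm_le:
  assumes "c > 0" "summable (\<lambda>j. \<phi> (\<bar>x j\<bar> / c))" "(\<Sum>j. \<phi> (\<bar>x j\<bar> / c)) \<le> 1"
  shows "orlicz_norm \<phi> x \<le> c"
  unfolding orlicz_norm_def
proof (rule cInf_lower)
  show "c \<in> {c. c > 0 \<and> summable (\<lambda>j. \<phi> (\<bar>x j\<bar> / c)) \<and> (\<Sum>j. \<phi> (\<bar>x j\<bar> / c)) \<le> 1}"
    using assms by simp
  show "bdd_below {c. c > 0 \<and> summable (\<lambda>j. \<phi> (\<bar>x j\<bar> / c)) \<and> (\<Sum>j. \<phi> (\<bar>x j\<bar> / c)) \<le> 1}"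
    by (rule bdd_belowI[of _ 0]) simp
qed

lemma orlicz_norm_ge:
  assumes "in_orlicz \<phi> x"
    "\<And>c. c > 0 \<Longrightarrow> summable (\<lambda>j. \<phi> (\<bar>x j\<bar> / c)) \<Longrightarrow> (\<Sum>j. \<phi> (\<bar>x j\<bar> / c)) \<le> 1 \<Longrightarrow> B \<le> c"
  shows "B \<le> orlicz_norm \<phi> x"
  unfolding orlicz_norm_def
  by (rule cInf_greatest) (use assms in \<open>auto simp: in_orlicz_def\<close>)

lemma orlicz_bounded:
  assumes "orlicz_function \<phi>" "c > 0" "summable (\<lambda>j. \<phi> (\<bar>x j\<bar> / c))" "(\<Sum>j. \<phi> (\<bar>x j\<bar> / c)) \<le> 1"
  shows "bounded (range x)"
proof (rule boundedI)
  fix y assume "y \<in> range x"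
  then obtain i where y: "y = x i" by auto
  have "\<phi> (\<bar>x i\<bar> / c) \<le> (\<Sum>j. \<phi> (\<bar>x j\<bar> / c))"
    using sum_le_suminf[OF assms(3), of "{i}"] orl_nonneg[OF assms(1)] assms(2) by auto
  then have le1: "\<phi> (\<bar>x i\<bar> / c) \<le> 1" using assms(4) by simp
  have "\<bar>x i\<bar> / c \<le> orlicz_inv \<phi> 1"
  proof (rule ccontr)
    assume "\<not> ?thesis"
    then have "\<phi> (orlicz_inv \<phi> 1) < \<phi> (\<bar>x i\<bar> / c)"
      using orl_strict[OF assms(1), of "orlicz_inv \<phi> 1" "\<bar>x i\<bar> / c"] orl_inv[OF assms(1), of 1] by simp
    then show False using orl_inv[OF assms(1), of 1] le1 by simp
  qed
  then show "norm y \<le> c * orlicz_inv \<phi> 1" using y assms(2) by (simp add: field_simps)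
qed


lemma psi_bound:
  assumes phi: "orlicz_function \<phi>" and p: "1 \<le> p" and b: "0 \<le> b" "b \<le> 1" and n: "1 \<le> n"
    and M: "\<And>k. 1 \<le> k \<Longrightarrow> k \<le> n \<Longrightarrow> real k * orlicz_inv \<phi> (1 / real k) powr p \<le> M"
  shows "orlicz_inv \<phi> b powr p \<le> M / real n + 2 * b * M"
proof -
  have "real 1 * orlicz_inv \<phi> (1 / real 1) powr p \<le> M" using M[of 1] n by simp
  moreover have "0 \<le> real 1 * orlicz_inv \<phi> (1 / real 1) powr p" by simp
  ultimately have M0: "0 \<le> M" by linarith
  have mono: "orlicz_inv \<phi> y powr p \<le> orlicz_inv \<phi> y' powr p" if "0 \<le> y" "y \<le> y'" for y y'
    using powr_mono2[of p "orlicz_inv \<phi> y" "orlicz_inv \<phi> y'"] orl_inv_mono[OF phi that] orl_inv[OF phi that(1)] p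
    by simp
  show ?thesis
  proof (cases "b < 1 / real n")
    case True
    have "orlicz_inv \<phi> b powr p \<le> orlicz_inv \<phi> (1 / real n) powr p"
      using mono[of b "1 / real n"] True b by simp
    also have "\<dots> \<le> M / real n" using M[of n] n by (simp add: field_simps)
    also have "\<dots> \<le> M / real n + 2 * b * M" using b M0 by simp
    finally show ?thesis .
  next
    case False
    have "0 < 1 / real n" using n by simp
    then have bpos: "0 < b" using False by linarith
    define k where "k = nat \<lfloor>1 / b\<rfloor>"
    have ge1: "1 \<le> 1 / b" using b bpos by simp
    have "0 \<le> \<lfloor>1 / b\<rfloor>" using bpos by simp
    then have rk: "real k = of_int \<lfloor>1 / b\<rfloor>" unfolding k_def by (rule of_nat_nat)
    have k1: "1 \<le> k" using ge1 unfolding k_def by linarith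
    have kb: "real k \<le> 1 / b" using rk of_int_floor_le[of "1/b"] by simp
    have kb2: "1 / b < real k + 1" using rk real_of_int_floor_add_one_gt[of "1/b"] by simp
    have "1 / b \<le> real n" using False bpos n by (auto simp: field_simps not_less)
    then have kn: "k \<le> n" using kb by linarith
    have bk: "b \<le> 1 / real k" using kb bpos k1 by (simp add: field_simps)
    have "orlicz_inv \<phi> b powr p \<le> orlicz_inv \<phi> (1 / real k) powr p"
      using mono[of b "1 / real k"] bk b by simp
    also have "\<dots> \<le> M / real k" using M[OF k1 kn] k1 by (simp add: field_simps)
    also have "\<dots> \<le> 2 * b * M"
    proof -
      have "1 < (real k + 1) * b" using kb2 bpos by (simp add: field_simps)
      moreover have "(real k + 1) * b \<le> (2 * real k) * b" using k1 bpos by (intro mult_right_mono) auto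
      ultimately have "1 \<le> 2 * b * real k" by (simp add: mult_ac)
      then have "M * 1 \<le> M * (2 * b * real k)" using M0 by (rule mult_left_mono)
      then show ?thesis using k1 by (simp add: field_simps)
    qed
    also have "\<dots> \<le> M / real n + 2 * b * M" using M0 by simp
    finally show ?thesis .
  qed
qed



lemma orl_nec:
  assumes phi: "orlicz_function \<phi>" and p: "1 \<le> p" and nu: "modulus_of_variation \<nu>"
    and emb: "embeds (in_orlicz \<phi>) (orlicz_norm \<phi>) (in_marc \<nu> p) (marc_norm \<nu> p)"
  shows "limsup (\<lambda>n. ereal (Max ((\<lambda>k. real k powr (1 / p) * orlicz_inv \<phi> (1 / real k)) ` {1..n}) / \<nu> n)) < \<infinity>"
proof -
  obtain C where C: "\<And>x. in_orlicz \<phi> x \<Longrightarrow> in_marc \<nu> p x \<and> marc_norm \<nu> p x \<le> C * orlicz_norm \<phi> x"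
    using emb by (auto simp: embeds_def)
  have key: "real k powr (1/p) * orlicz_inv \<phi> (1/real k) / \<nu> n \<le> max C 0" if k: "1 \<le> k" "k \<le> n" for k n
  proof -
    define a where "a = orlicz_inv \<phi> (1 / real k)"
    have a0: "0 \<le> a" "\<phi> a = 1/real k" using orl_inv[OF phi, of "1/real k"] a_def by auto
    have apos: "0 < a" using a0 orl_zero[OF phi] k by (cases "a = 0") auto
    define x where "x = (\<lambda>i::nat. if i < k then a else 0)"
    have phx: "(\<lambda>j. \<phi> (\<bar>x j\<bar> / 1)) = (\<lambda>j. if j \<in> {..<k} then 1 / real k else 0)"
      using a0 apos orl_zero[OF phi] by (auto simp: x_def fun_eq_iff)
    have sx: "(\<lambda>j. \<phi> (\<bar>x j\<bar> / 1)) sums 1"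
      unfolding phx using sums_If_finite_set[of "{..<k}" "\<lambda>_. 1/real k"] k by simp
    have inx: "in_orlicz \<phi> x" unfolding in_orlicz_def using sx
      by (intro exI[of _ 1]) (auto simp: sums_iff)
    have nx: "orlicz_norm \<phi> x \<le> 1" using sx by (intro orlicz_norm_le) (auto simp: sums_iff)
    have nx0: "0 \<le> orlicz_norm \<phi> x" by (rule orlicz_norm_ge[OF inx]) simp
    have mx: "in_marc \<nu> p x" and mle: "marc_norm \<nu> p x \<le> C * orlicz_norm \<phi> x" using C inx by auto
    have nupos: "0 < \<nu> n" using nu k by (auto simp: modulus_of_variation_def)
    have dr: "decr_rearr x j = (if j < k then a else 0)" for j unfolding x_def by (rule dr_ind[OF apos])
    have "(\<Sum>j<n. decr_rearr x j powr p) = (\<Sum>j<n. if j < k then a powr p else 0)"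
      by (rule sum.cong) (auto simp: dr)
    also have "\<dots> = (\<Sum>j\<in>{..<n} \<inter> {j. j<k}. a powr p)" by (simp add: sum.If_cases)
    also have "{..<n} \<inter> {j. j<k} = {..<k}" using k by auto
    finally have S: "(\<Sum>j<n. decr_rearr x j powr p) = real k * a powr p" by simp
    have "real k powr (1/p) * a / \<nu> n = mseq_term \<nu> p x n"
      unfolding mseq_term_def S using p apos by (simp add: powr_mult powr_powr)
    also have "\<dots> \<le> marc_norm \<nu> p x" using marc_ge[OF mx] k by simp
    also have "\<dots> \<le> C * orlicz_norm \<phi> x" by (rule mle)
    also have "\<dots> \<le> max C 0 * orlicz_norm \<phi> x" using nx0 by (intro mult_right_mono) auto
    also have "\<dots> \<le> max C 0 * 1" using nx by (intro mult_left_mono) auto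
    finally show ?thesis using a_def by simp
  qed
  show ?thesis
  proof (rule limsup_lt[where K="max C 0"])
    fix n :: nat assume n: "1 \<le> n"
    let ?f = "\<lambda>k. real k powr (1 / p) * orlicz_inv \<phi> (1 / real k)"
    have "Max (?f ` {1..n}) \<in> ?f ` {1..n}" using n by (intro Max_in) auto
    then obtain k where k: "k \<in> {1..n}" "Max (?f ` {1..n}) = ?f k" by auto
    show "Max (?f ` {1..n}) / \<nu> n \<le> max C 0" using key[of k n] k by simp
  qed
qed



lemma orl_main:
  assumes phi: "orlicz_function \<phi>" and p: "1 \<le> p" and nu: "modulus_of_variation \<nu>"
    and MoK: "\<And>n. 1 \<le> n \<Longrightarrow> Max ((\<lambda>k. real k powr (1 / p) * orlicz_inv \<phi> (1 / real k)) ` {1..n}) \<le> K * \<nu> n"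
    and c: "c > 0" "summable (\<lambda>j. \<phi> (\<bar>x j\<bar> / c))" "(\<Sum>j. \<phi> (\<bar>x j\<bar> / c)) \<le> 1"
    and n: "1 \<le> n"
  shows "mseq_term \<nu> p x n \<le> 3 powr (1/p) * K * c"
proof -
  let ?f = "\<lambda>k. real k powr (1 / p) * orlicz_inv \<phi> (1 / real k)"
  let ?Mo = "Max (?f ` {1..n})"
  have fk: "?f k \<le> ?Mo" if "k \<in> {1..n}" for k using that by (intro Max_ge) auto
  have f0: "0 \<le> ?f k" for k using orl_inv[OF phi, of "1 / real k"] by simp
  have Mo0: "0 \<le> ?Mo" using fk[of 1] f0[of 1] n by simp
  have nupos: "0 < \<nu> n" using nu n by (auto simp: modulus_of_variation_def)
  have bd: "bounded (range x)" by (rule orlicz_bounded[OF phi c])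
  define g where "g s = \<phi> (s / c)" for s
  have gsum: "(\<Sum>j<n. g (decr_rearr x j)) \<le> (\<Sum>i. g \<bar>x i\<bar>)"
  proof (rule dr_sum_le[OF bd])
    show "g 0 = 0" using orl_zero[OF phi] by (simp add: g_def)
    show "g a \<le> g b" if "0 \<le> a" "a \<le> b" for a b
      unfolding g_def using that c(1) by (intro orl_mono[OF phi]) (auto intro: divide_right_mono)
    have cphi: "continuous_on {0..} \<phi>" using phi by (simp add: orlicz_function_def)
    show "continuous_on {0..} g" unfolding g_def
      by (rule continuous_on_compose2[OF cphi]) (use c(1) in \<open>auto intro!: continuous_intros\<close>)
    show "summable (\<lambda>i. g \<bar>x i\<bar>)" using c(2) by (simp add: g_def)
  qed
  define b where "b j = \<phi> (decr_rearr x j / c)" for j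
  have b0: "0 \<le> b j" for j unfolding b_def using dr_nonneg[OF bd] c(1) by (intro orl_nonneg[OF phi]) simp
  have bsum: "(\<Sum>j<n. b j) \<le> 1" using gsum c(3) by (simp add: g_def b_def)
  have b1: "b j \<le> 1" if "j < n" for j
  proof -
    have "b j \<le> (\<Sum>j<n. b j)" using that b0 by (intro member_le_sum) auto
    then show ?thesis using bsum by simp
  qed
  have binv: "decr_rearr x j / c = orlicz_inv \<phi> (b j)" for j
    unfolding b_def using dr_nonneg[OF bd] c(1) by (simp add: orl_inv_f[OF phi])
  define M where "M = ?Mo powr p"
  have M: "real k * orlicz_inv \<phi> (1 / real k) powr p \<le> M" if "1 \<le> k" "k \<le> n" for k
  proof -
    have "?f k powr p \<le> M" unfolding M_def using fk[of k] that f0[of k] p by (intro powr_mono2) auto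
    moreover have "?f k powr p = real k * orlicz_inv \<phi> (1 / real k) powr p"
      using p orl_inv[OF phi, of "1 / real k"] by (simp add: powr_mult powr_powr)
    ultimately show ?thesis by simp
  qed
  have "(\<Sum>j<n. (decr_rearr x j / c) powr p) \<le> (\<Sum>j<n. M / real n + 2 * b j * M)"
  proof (rule sum_mono)
    fix j assume "j \<in> {..<n}"
    then show "(decr_rearr x j / c) powr p \<le> M / real n + 2 * b j * M"
      unfolding binv using b0[of j] b1[of j] by (intro psi_bound[OF phi p _ _ n M]) auto
  qed
  also have "\<dots> = M + 2 * M * (\<Sum>j<n. b j)" using n by (simp add: sum.distrib sum_distrib_left mult_ac)
  also have "\<dots> \<le> M + 2 * M * 1" using bsum M_def by (intro add_left_mono mult_left_mono) auto
  finally have S1: "(\<Sum>j<n. (decr_rearr x j / c) powr p) \<le> 3 * M" by simp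
  have "(\<Sum>j<n. decr_rearr x j powr p) = c powr p * (\<Sum>j<n. (decr_rearr x j / c) powr p)"
    unfolding sum_distrib_left
  proof (rule sum.cong)
    fix j
    have "decr_rearr x j = c * (decr_rearr x j / c)" using c(1) by simp
    then show "decr_rearr x j powr p = c powr p * (decr_rearr x j / c) powr p"
      by (metis powr_mult)
  qed simp
  also have "\<dots> \<le> c powr p * (3 * M)" using S1 by (intro mult_left_mono) auto
  finally have S2: "(\<Sum>j<n. decr_rearr x j powr p) \<le> c powr p * (3 * M)" .
  have "(\<Sum>j<n. decr_rearr x j powr p) powr (1/p) \<le> (c powr p * (3 * M)) powr (1/p)"
    using S2 p by (intro powr_mono2) (auto intro: sum_nonneg)
  also have "\<dots> = c * 3 powr (1/p) * ?Mo"
    unfolding M_def using p c(1) Mo0 by (simp add: powr_mult powr_powr)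
  also have "\<dots> \<le> c * 3 powr (1/p) * (K * \<nu> n)" using MoK[OF n] c(1) by (intro mult_left_mono) auto
  finally have "(\<Sum>j<n. decr_rearr x j powr p) powr (1/p) \<le> (3 powr (1/p) * K * c) * \<nu> n"
    by (simp add: mult_ac)
  then show ?thesis unfolding mseq_term_def using nupos by (simp add: pos_divide_le_eq)
qed

lemma orl_suf:
  assumes phi: "orlicz_function \<phi>" and p: "1 \<le> p" and nu: "modulus_of_variation \<nu>"
    and lim: "limsup (\<lambda>n. ereal (Max ((\<lambda>k. real k powr (1 / p) * orlicz_inv \<phi> (1 / real k)) ` {1..n}) / \<nu> n)) < \<infinity>"
  shows "embeds (in_orlicz \<phi>) (orlicz_norm \<phi>) (in_marc \<nu> p) (marc_norm \<nu> p)"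
proof -
  let ?Mo = "\<lambda>n. Max ((\<lambda>k. real k powr (1 / p) * orlicz_inv \<phi> (1 / real k)) ` {1..n})"
  obtain K0 where K0: "\<And>n. ?Mo n / \<nu> n \<le> K0" using limsup_finite_then_bounded[OF lim] by blast
  define K where "K = max K0 1"
  have MoK: "?Mo n \<le> K * \<nu> n" if "1 \<le> n" for n
  proof -
    have "0 < \<nu> n" using nu that by (auto simp: modulus_of_variation_def)
    moreover have "?Mo n / \<nu> n \<le> K" using K0[of n] by (simp add: K_def)
    ultimately show ?thesis by (simp add: pos_divide_le_eq)
  qed
  define D where "D = 3 powr (1/p) * K"
  have Dpos: "0 < D" unfolding D_def K_def by simp
  show ?thesis unfolding embeds_def
  proof (intro exI[of _ D] allI impI conjI)
    fix x assume inx: "in_orlicz \<phi> x"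
    then obtain c0 where c0: "c0 > 0" "summable (\<lambda>j. \<phi> (\<bar>x j\<bar> / c0))" "(\<Sum>j. \<phi> (\<bar>x j\<bar> / c0)) \<le> 1"
      by (auto simp: in_orlicz_def)
    have bd: "bounded (range x)" by (rule orlicz_bounded[OF phi c0])
    have mb: "mseq_term \<nu> p x n \<le> D * c"
      if "c > 0" "summable (\<lambda>j. \<phi> (\<bar>x j\<bar> / c))" "(\<Sum>j. \<phi> (\<bar>x j\<bar> / c)) \<le> 1" "1 \<le> n" for c n
      unfolding D_def by (rule orl_main[OF phi p nu MoK that])
    show "in_marc \<nu> p x" unfolding in_marc_def
      using bd mb[OF c0] by (auto simp: bdd_above_def)
    have "marc_norm \<nu> p x / D \<le> orlicz_norm \<phi> x"
    proof (rule orlicz_norm_ge[OF inx])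
      fix c assume "c > 0" "summable (\<lambda>j. \<phi> (\<bar>x j\<bar> / c))" "(\<Sum>j. \<phi> (\<bar>x j\<bar> / c)) \<le> 1"
      then have "marc_norm \<nu> p x \<le> D * c" by (intro marc_le mb) auto
      then show "marc_norm \<nu> p x / D \<le> c" using Dpos by (simp add: divide_le_eq mult_ac)
    qed
    then show "marc_norm \<nu> p x \<le> D * orlicz_norm \<phi> x" using Dpos by (simp add: divide_le_eq mult_ac)
  qed
qed



lemma powr_convex0:
  assumes r: "1 \<le> r" shows "convex_on {0..} (\<lambda>x::real. x powr r)"
proof (rule convex_onI)
  show "convex {0::real..}" by simp
  fix t x y :: real assume t: "0 < t" "t < 1" and xy: "x \<in> {0..}" "y \<in> {0..}"
  have tr: "s powr r \<le> s" if "0 \<le> s" "s \<le> 1" for s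
    using powr_mono'[of 1 r s] that r by simp
  show "((1 - t) *\<^sub>R x + t *\<^sub>R y) powr r \<le> (1 - t) * x powr r + t * y powr r"
  proof (cases "x = 0")
    case True
    have "(t * y) powr r = t powr r * y powr r" by (simp add: powr_mult)
    also have "\<dots> \<le> t * y powr r" using tr[of t] t by (intro mult_right_mono) auto
    finally show ?thesis using True r by simp
  next
    case x: False
    show ?thesis
    proof (cases "y = 0")
      case True
      have "((1 - t) * x) powr r = (1 - t) powr r * x powr r" using t by (simp add: powr_mult)
      also have "\<dots> \<le> (1 - t) * x powr r" using tr[of "1 - t"] t by (intro mult_right_mono) auto
      finally show ?thesis using True r by simp
    next
      case False
      then show ?thesis using x xy t
        by (intro convex_onD[OF powr_convex[OF r]]) auto
    qed
  qed
qed

lemma jensen_powr: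
  fixes lam y :: "'a \<Rightarrow> real"
  assumes I: "finite I" and r: "1 \<le> r" and lam: "\<And>i. i \<in> I \<Longrightarrow> 0 \<le> lam i"
    and y: "\<And>i. i \<in> I \<Longrightarrow> 0 \<le> y i" and s1: "sum lam I \<le> 1"
  shows "(\<Sum>i\<in>I. lam i * y i) powr r \<le> (\<Sum>i\<in>I. lam i * y i powr r)"
proof (cases "sum lam I = 0")
  case True
  then have "\<forall>i\<in>I. lam i = 0" using sum_nonneg_eq_0_iff[OF I] lam by blast
  then show ?thesis using r by simp
next
  case False
  define L where "L = sum lam I"
  have L: "0 < L" "L \<le> 1" using False s1 lam sum_nonneg[of I lam] unfolding L_def by force+
  define a where "a i = lam i / L" for i
  have "I \<noteq> {}" using False by auto
  have a1: "sum a I = 1" unfolding a_def L_def using False by (simp add: sum_divide_distrib[symmetric])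
  have "(\<lambda>x. x powr r) (\<Sum>i\<in>I. a i *\<^sub>R y i) \<le> (\<Sum>i\<in>I. a i * (\<lambda>x. x powr r) (y i))"
    by (rule convex_on_sum[OF I \<open>I \<noteq> {}\<close> powr_convex0[OF r] a1])
       (use lam y L in \<open>auto simp: a_def\<close>)
  then have J: "(\<Sum>i\<in>I. a i * y i) powr r \<le> (\<Sum>i\<in>I. a i * y i powr r)" by simp
  have m0: "0 \<le> (\<Sum>i\<in>I. a i * y i)" using lam y L by (auto simp: a_def intro!: sum_nonneg)
  have e1: "(\<Sum>i\<in>I. lam i * y i) = L * (\<Sum>i\<in>I. a i * y i)"
    unfolding a_def sum_distrib_left using L by (intro sum.cong) auto
  have e2: "(\<Sum>i\<in>I. lam i * y i powr r) = L * (\<Sum>i\<in>I. a i * y i powr r)"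
    unfolding a_def sum_distrib_left using L by (intro sum.cong) auto
  have "(\<Sum>i\<in>I. lam i * y i) powr r = L powr r * (\<Sum>i\<in>I. a i * y i) powr r"
    unfolding e1 using L m0 by (simp add: powr_mult)
  also have "\<dots> \<le> L powr r * (\<Sum>i\<in>I. a i * y i powr r)" using J by (intro mult_left_mono) auto
  also have "L powr r = L * L powr (r - 1)" using L by (simp add: powr_diff)
  also have "L * L powr (r - 1) * (\<Sum>i\<in>I. a i * y i powr r) \<le> L * 1 * (\<Sum>i\<in>I. a i * y i powr r)"
  proof (intro mult_right_mono mult_left_mono)
    show "L powr (r - 1) \<le> 1" using powr_mono'[of 0 "r - 1" L] L r by simp
    show "0 \<le> (\<Sum>i\<in>I. a i * y i powr r)" using lam y L by (auto simp: a_def intro!: sum_nonneg)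
  qed (use L in auto)
  finally show ?thesis using e2 by simp
qed

lemma lor_nec:
  assumes p: "1 \<le> p" and q: "1 \<le> q" and nu: "modulus_of_variation \<nu>" and w: "weight_sequence w"
    and emb: "embeds (in_lorentz w q) (lorentz_norm w q) (in_marc \<nu> p) (marc_norm \<nu> p)"
  shows "limsup (\<lambda>n. ereal (Max ((\<lambda>k. real k powr (1 / p) * (\<Sum>j<k. w j) powr (- 1 / q)) ` {1..n}) / \<nu> n)) < \<infinity>"
proof -
  obtain C where C: "\<And>x. in_lorentz w q x \<Longrightarrow> in_marc \<nu> p x \<and> marc_norm \<nu> p x \<le> C * lorentz_norm w q x"
    using emb by (auto simp: embeds_def)
  have wpos: "\<And>j. 0 < w j" using w by (simp add: weight_sequence_def)
  have key: "real k powr (1/p) * (\<Sum>j<k. w j) powr (- 1 / q) / \<nu> n \<le> max C 0" if k: "1 \<le> k" "k \<le> n" for k n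
  proof -
    define W where "W = (\<Sum>j<k. w j)"
    have "(0::nat) \<in> {..<k}" using k by simp
    then have "{..<k} \<noteq> {}" by blast
    then have Wpos: "0 < W" unfolding W_def using wpos by (intro sum_pos) auto
    define x where "x = (\<lambda>i::nat. if i < k then (1::real) else 0)"
    have dr: "decr_rearr x j = (if j < k then 1 else 0)" for j unfolding x_def by (rule dr_ind) simp
    have bd: "bounded (range x)" unfolding x_def by (rule boundedI[of _ 1]) auto
    have tx: "(\<lambda>j. decr_rearr x j powr q * w j) = (\<lambda>j. if j \<in> {..<k} then w j else 0)"
      using q by (auto simp: dr fun_eq_iff)
    have sx: "(\<lambda>j. decr_rearr x j powr q * w j) sums W"
      unfolding tx W_def by (rule sums_If_finite_set) simp
    have inx: "in_lorentz w q x" unfolding in_lorentz_def using bd sx by (auto simp: sums_iff)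
    have nx: "lorentz_norm w q x = W powr (1/q)" unfolding lorentz_norm_def using sx by (simp add: sums_iff)
    have mx: "in_marc \<nu> p x" and mle: "marc_norm \<nu> p x \<le> C * lorentz_norm w q x" using C inx by auto
    have nupos: "0 < \<nu> n" using nu k by (auto simp: modulus_of_variation_def)
    have "(\<Sum>j<n. decr_rearr x j powr p) = (\<Sum>j<n. if j < k then 1 else 0)"
      by (rule sum.cong) (use p in \<open>auto simp: dr\<close>)
    also have "\<dots> = (\<Sum>j\<in>{..<n} \<inter> {j. j<k}. 1)" by (simp add: sum.If_cases)
    also have "{..<n} \<inter> {j. j<k} = {..<k}" using k by auto
    finally have S: "(\<Sum>j<n. decr_rearr x j powr p) = real k" by simp
    have "real k powr (1/p) / \<nu> n = mseq_term \<nu> p x n"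
      unfolding mseq_term_def S by simp
    also have "\<dots> \<le> marc_norm \<nu> p x" using marc_ge[OF mx] k by simp
    also have "\<dots> \<le> C * W powr (1/q)" using mle nx by simp
    also have "\<dots> \<le> max C 0 * W powr (1/q)" by (intro mult_right_mono) auto
    finally have AA: "real k powr (1/p) / \<nu> n \<le> max C 0 * W powr (1/q)" .
    have Wq: "0 < W powr (1/q)" using Wpos by simp
    have "real k powr (1/p) / \<nu> n / W powr (1/q) \<le> max C 0"
      by (subst pos_divide_le_eq[OF Wq]) (rule AA)
    moreover have "real k powr (1/p) * W powr (- 1 / q) / \<nu> n = real k powr (1/p) / \<nu> n / W powr (1/q)"
    proof -
      have e: "- 1 / q = - (1/q)" by simp
      have Winv: "W powr (- 1 / q) = inverse (W powr (1/q))"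
        unfolding e by (rule powr_minus)
      show ?thesis unfolding Winv by (simp only: divide_inverse mult_ac)
    qed
    ultimately have "real k powr (1/p) * W powr (- 1 / q) / \<nu> n \<le> max C 0" by linarith
    then show ?thesis unfolding W_def .
  qed
  show ?thesis
  proof (rule limsup_lt[where K="max C 0"])
    fix n :: nat assume n: "1 \<le> n"
    let ?f = "\<lambda>k. real k powr (1 / p) * (\<Sum>j<k. w j) powr (- 1 / q)"
    have "Max (?f ` {1..n}) \<in> ?f ` {1..n}" using n by (intro Max_in) auto
    then obtain k where k: "k \<in> {1..n}" "Max (?f ` {1..n}) = ?f k" by auto
    show "Max (?f ` {1..n}) / \<nu> n \<le> max C 0" using key[of k n] k by simp
  qed
qed



lemma sum_powr_bound:
  fixes r :: real
  assumes r: "0 < r" "r < 1"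
  shows "(\<Sum>j<n. real (Suc j) powr (- r)) \<le> real n powr (1 - r) / (1 - r)"
proof (induction n)
  case 0
  then show ?case by simp
next
  case (Suc n)
  have step: "real (Suc n) powr (- r) \<le> (real (Suc n) powr (1 - r) - real n powr (1 - r)) / (1 - r)"
  proof (cases "n = 0")
    case True
    then show ?thesis using r by (simp add: field_simps)
  next
    case False
    then have n0: "0 < real n" by simp
    have D: "((\<lambda>x. x powr (1 - r)) has_real_derivative (1 - r) * x powr (- r)) (at x)"
      if "real n \<le> x" "x \<le> real n + 1" for x
    proof -
      have "0 < x" using that n0 by linarith
      from has_real_derivative_powr[OF this, of "1 - r"] show ?thesis by simp
    qed
    have "\<exists>z>real n. z < real n + 1 \<and>
        (real n + 1) powr (1 - r) - real n powr (1 - r) = (real n + 1 - real n) * ((1 - r) * z powr (- r))"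
      by (rule MVT2[of "real n" "real n + 1" "\<lambda>x. x powr (1 - r)" "\<lambda>x. (1 - r) * x powr (- r)"])
        (use D in auto)
    then obtain z where z: "real n < z" "z < real n + 1"
      and eq: "(real n + 1) powr (1 - r) - real n powr (1 - r) = (1 - r) * z powr (- r)" by auto
    have "real (Suc n) powr (- r) \<le> z powr (- r)"
      using z n0 r by (intro powr_mono2') auto
    then have "(1 - r) * real (Suc n) powr (- r) \<le> (1 - r) * z powr (- r)"
      using r by (intro mult_left_mono) auto
    then show ?thesis using eq r by (simp add: field_simps add.commute)
  qed
  have "(\<Sum>j<Suc n. real (Suc j) powr (- r)) = (\<Sum>j<n. real (Suc j) powr (- r)) + real (Suc n) powr (- r)"
    by simp
  also have "\<dots> \<le> real n powr (1 - r) / (1 - r) + (real (Suc n) powr (1 - r) - real n powr (1 - r)) / (1 - r)"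
    using Suc.IH step by linarith
  also have "\<dots> = real (Suc n) powr (1 - r) / (1 - r)" by (simp add: diff_divide_distrib)
  finally show ?case .
qed

lemma W_conc:
  fixes w :: "nat \<Rightarrow> real"
  assumes w: "decseq w" and k: "1 \<le> k" "k \<le> n"
  shows "real k * (\<Sum>j<n. w j) \<le> real n * (\<Sum>j<k. w j)"
proof -
  have stp: "(\<Sum>j<Suc m. w j) / real (Suc m) \<le> (\<Sum>j<m. w j) / real m" if "1 \<le> m" for m
  proof -
    have "(\<Sum>j<m. w m) \<le> (\<Sum>j<m. w j)" using w by (intro sum_mono) (auto simp: decseq_def)
    then have "real m * w m \<le> (\<Sum>j<m. w j)" by simp
    then have "real m * (\<Sum>j<Suc m. w j) \<le> real (Suc m) * (\<Sum>j<m. w j)" by (simp add: algebra_simps)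
    then show ?thesis using that by (simp add: field_simps)
  qed
  have "(\<Sum>j<n. w j) / real n \<le> (\<Sum>j<k. w j) / real k"
    using k(2)
  proof (induction n rule: dec_induct)
    case base
    then show ?case by simp
  next
    case (step m)
    then show ?case using stp[of m] k(1) by linarith
  qed
  then show ?thesis using k by (simp add: field_simps)
qed



lemma bW_le:
  fixes b w :: "nat \<Rightarrow> real"
  assumes w0: "\<And>j. 0 \<le> w j" and b0: "\<And>j. 0 \<le> b j" and bdec: "\<And>i j. i \<le> j \<Longrightarrow> b j \<le> b i"
    and Sb: "(\<Sum>j<n. b j * w j) \<le> S" and j: "j < n"
  shows "b j * (\<Sum>i<Suc j. w i) \<le> S"
proof -
  have "b j * (\<Sum>i<Suc j. w i) = (\<Sum>i<Suc j. b j * w i)" by (rule sum_distrib_left)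
  also have "\<dots> \<le> (\<Sum>i<Suc j. b i * w i)"
    by (intro sum_mono mult_right_mono bdec w0) auto
  also have "\<dots> \<le> (\<Sum>i<n. b i * w i)"
    using j by (intro sum_mono2) (auto intro!: mult_nonneg_nonneg b0 w0)
  finally show ?thesis using Sb by simp
qed

lemma lor_lt1:
  fixes b w :: "nat \<Rightarrow> real"
  assumes r: "0 < r" "r < 1" and w: "decseq w" "\<And>j. 0 < w j"
    and b0: "\<And>j. 0 \<le> b j" and bdec: "\<And>i j. i \<le> j \<Longrightarrow> b j \<le> b i"
    and Sb: "(\<Sum>j<n. b j * w j) \<le> S" and n: "1 \<le> n"
    and M: "real n * (\<Sum>j<n. w j) powr (- r) \<le> M"
  shows "(\<Sum>j<n. b j powr r) \<le> S powr r * M / (1 - r)"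
proof -
  define Wn where "Wn = (\<Sum>j<n. w j)"
  have "(0::nat) \<in> {..<n}" using n by simp
  then have Wn: "0 < Wn" unfolding Wn_def using w(2) by (intro sum_pos) auto
  have "0 \<le> (\<Sum>j<n. b j * w j)" using b0 w(2) by (intro sum_nonneg mult_nonneg_nonneg) (auto intro: less_imp_le)
  then have S0: "0 \<le> S" using Sb by linarith
  define A where "A = S * (real n / Wn)"
  have A0: "0 \<le> A" unfolding A_def using S0 Wn by simp
  have bj: "b j powr r \<le> A powr r * real (Suc j) powr (- r)" if j: "j < n" for j
  proof -
    define WJ where "WJ = (\<Sum>i<Suc j. w i)"
    have bw: "b j * WJ \<le> S" unfolding WJ_def
      by (rule bW_le[OF _ b0 bdec Sb j]) (use w(2) less_imp_le in auto)
    have wc: "real (Suc j) * Wn \<le> real n * WJ" unfolding Wn_def WJ_def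
      by (rule W_conc[OF w(1)]) (use j in auto)
    have "(0::nat) \<in> {..<Suc j}" by simp
    then have WJ0: "0 < WJ" unfolding WJ_def using w(2) by (intro sum_pos) auto
    have "b j \<le> S / WJ" using bw WJ0 by (simp add: pos_le_divide_eq)
    also have "S / WJ \<le> A / real (Suc j)"
    proof -
      have "S * (real (Suc j) * Wn) \<le> S * (real n * WJ)" using wc S0 by (rule mult_left_mono)
      then have "S * real (Suc j) * Wn \<le> S * real n * WJ" by (simp add: mult_ac)
      then have "S / WJ \<le> S * real n / (real (Suc j) * Wn)"
        using Wn WJ0 by (simp add: divide_le_eq le_divide_eq mult_ac del: of_nat_Suc)
      then show ?thesis unfolding A_def by (simp add: mult_ac del: of_nat_Suc)
    qed
    finally have "b j powr r \<le> (A / real (Suc j)) powr r" using b0[of j] r by (intro powr_mono2) auto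
    also have "\<dots> = A powr r / real (Suc j) powr r" using A0 by (simp add: powr_divide)
    also have "\<dots> = A powr r * real (Suc j) powr (- r)" by (simp add: powr_minus divide_inverse)
    finally show ?thesis .
  qed
  have "(\<Sum>j<n. b j powr r) \<le> (\<Sum>j<n. A powr r * real (Suc j) powr (- r))"
    by (intro sum_mono bj) auto
  also have "\<dots> = A powr r * (\<Sum>j<n. real (Suc j) powr (- r))" by (simp add: sum_distrib_left)
  also have "\<dots> \<le> A powr r * (real n powr (1 - r) / (1 - r))"
    by (intro mult_left_mono sum_powr_bound r) auto
  also have "A powr r * (real n powr (1 - r) / (1 - r)) = S powr r * (real n * Wn powr (- r)) / (1 - r)"
  proof -
    have "A powr r = S powr r * real n powr r / Wn powr r" unfolding A_def using S0 Wn
      by (simp add: powr_mult powr_divide)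
    moreover have "real n powr r * real n powr (1 - r) = real n" using n by (simp add: powr_add[symmetric])
    moreover have "Wn powr (- r) = 1 / Wn powr r" by (simp add: powr_minus divide_inverse)
    ultimately show ?thesis by (simp add: divide_inverse mult_ac)
  qed
  also have "\<dots> \<le> S powr r * M / (1 - r)"
    using M r unfolding Wn_def by (intro divide_right_mono mult_left_mono) auto
  finally show ?thesis .
qed



lemma lor_ge1:
  fixes b w :: "nat \<Rightarrow> real"
  assumes r: "1 \<le> r" and w: "\<And>j. 0 < w j"
    and b0: "\<And>j. 0 \<le> b j" and bdec: "\<And>i j. i \<le> j \<Longrightarrow> b j \<le> b i"
    and Sb: "(\<Sum>j<n. b j * w j) \<le> S" and n: "1 \<le> n"
    and M: "\<And>k. 1 \<le> k \<Longrightarrow> k \<le> n \<Longrightarrow> real k * (\<Sum>j<k. w j) powr (- r) \<le> M"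
  shows "(\<Sum>j<n. b j powr r) \<le> S powr r * M"
proof -
  have w0: "0 \<le> w j" for j using w[of j] by simp
  have bw0: "0 \<le> (\<Sum>j<n. b j * w j)" using b0 w0 by (intro sum_nonneg mult_nonneg_nonneg) auto
  then have S0: "0 \<le> S" using Sb by linarith
  have "real 1 * (\<Sum>j<1. w j) powr (- r) \<le> M" using M[of 1] n by simp
  moreover have "0 \<le> real 1 * (\<Sum>j<1. w j) powr (- r)" by simp
  ultimately have M0: "0 \<le> M" by linarith
  show ?thesis
  proof (cases "S = 0")
    case True
    have s0: "(\<Sum>j<n. b j * w j) = 0" using Sb bw0 True by linarith
    have "\<forall>j\<in>{..<n}. b j * w j = 0"
      using sum_nonneg_eq_0_iff[of "{..<n}" "\<lambda>j. b j * w j"] b0 w0 s0 by simp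
    then have "\<forall>j\<in>{..<n}. b j = 0" using w by (simp add: less_imp_neq[symmetric])
    then have "(\<Sum>j<n. b j powr r) = 0" by simp
    then show ?thesis using True by simp
  next
    case False
    then have Spos: "0 < S" using S0 by simp
    define B where "B i = (if i < n then b i else 0)" for i
    define d where "d i = B i - B (Suc i)" for i
    have d0: "0 \<le> d i" if "i < n" for i
      using that bdec[of i "Suc i"] b0[of i] unfolding d_def B_def by auto
    have T: "b j = (\<Sum>i<n. if j \<le> i then d i else 0)" if j: "j < n" for j
    proof -
      have "(\<Sum>i<n. if j \<le> i then d i else 0) = (\<Sum>i\<in>{i\<in>{..<n}. j \<le> i}. d i)"
        by (rule sum.inter_filter[symmetric]) simp
      also have "{i\<in>{..<n}. j \<le> i} = {j..<n}" by auto
      also have "(\<Sum>i\<in>{j..<n}. d i) = (\<Sum>i=j..<n. (- B (Suc i)) - (- B i))"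
        unfolding d_def by simp
      also have "\<dots> = - B n - - B j" using j by (intro sum_Suc_diff') simp
      also have "\<dots> = b j" using j by (simp add: B_def)
      finally show ?thesis by simp
    qed
    define Wv where "Wv i = (\<Sum>j<Suc i. w j)" for i
    have Wv0: "0 < Wv i" for i
    proof -
      have "(0::nat) \<in> {..<Suc i}" by simp
      then show ?thesis unfolding Wv_def using w by (intro sum_pos) auto
    qed
    have Wv_eq: "Wv i = (\<Sum>j<n. if j \<le> i then w j else 0)" if "i < n" for i
    proof -
      have "(\<Sum>j<n. if j \<le> i then w j else 0) = (\<Sum>j\<in>{j\<in>{..<n}. j \<le> i}. w j)"
        by (rule sum.inter_filter[symmetric]) simp
      also have "{j\<in>{..<n}. j \<le> i} = {..<Suc i}" using that by auto
      finally show ?thesis unfolding Wv_def by simp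
    qed
    have E: "(\<Sum>i<n. d i * Wv i) = (\<Sum>j<n. b j * w j)"
    proof -
      have "(\<Sum>i<n. d i * Wv i) = (\<Sum>i<n. \<Sum>j<n. if j \<le> i then d i * w j else 0)"
        by (intro sum.cong) (auto simp: Wv_eq sum_distrib_left intro!: sum.cong)
      also have "\<dots> = (\<Sum>j<n. \<Sum>i<n. if j \<le> i then d i * w j else 0)" by (rule sum.swap)
      also have "\<dots> = (\<Sum>j<n. (\<Sum>i<n. if j \<le> i then d i else 0) * w j)"
        by (intro sum.cong) (auto simp: sum_distrib_right intro!: sum.cong)
      also have "\<dots> = (\<Sum>j<n. b j * w j)" by (intro sum.cong) (auto simp: T)
      finally show ?thesis .
    qed
    define lam where "lam i = d i * Wv i / S" for i
    define y where "y i j = (if j \<le> i then S / Wv i else 0)" for i j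
    have lam0: "0 \<le> lam i" if "i < n" for i
      unfolding lam_def using d0[OF that] Wv0[of i] Spos by simp
    have lam1: "(\<Sum>i<n. lam i) \<le> 1"
    proof -
      have "(\<Sum>i<n. lam i) = (\<Sum>i<n. d i * Wv i) / S" unfolding lam_def by (simp add: sum_divide_distrib)
      also have "\<dots> \<le> 1" using E Sb Spos by simp
      finally show ?thesis .
    qed
    have ly: "lam i * y i j = (if j \<le> i then d i else 0)" for i j
      unfolding lam_def y_def using Wv0[of i] Spos by simp
    have yy: "0 \<le> y i j" for i j unfolding y_def using Spos Wv0[of i] by simp
    have jen: "b j powr r \<le> (\<Sum>i<n. lam i * y i j powr r)" if j: "j < n" for j
    proof -
      have "b j = (\<Sum>i<n. lam i * y i j)" using T[OF j] by (simp add: ly)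
      then have "b j powr r = (\<Sum>i<n. lam i * y i j) powr r" by simp
      also have "\<dots> \<le> (\<Sum>i<n. lam i * y i j powr r)"
        by (rule jensen_powr[OF _ r _ _ lam1]) (use lam0 yy in auto)
      finally show ?thesis .
    qed
    have ysum: "(\<Sum>j<n. y i j powr r) \<le> S powr r * M" if i: "i < n" for i
    proof -
      have "(\<Sum>j<n. y i j powr r) = (\<Sum>j<n. if j \<le> i then (S / Wv i) powr r else 0)"
        by (intro sum.cong) (use r in \<open>auto simp: y_def\<close>)
      also have "\<dots> = (\<Sum>j\<in>{j\<in>{..<n}. j \<le> i}. (S / Wv i) powr r)"
        by (rule sum.inter_filter[symmetric]) simp
      also have "{j\<in>{..<n}. j \<le> i} = {..<Suc i}" using i by auto
      also have "(\<Sum>j\<in>{..<Suc i}. (S / Wv i) powr r) = real (Suc i) * (S / Wv i) powr r" by simp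
      also have "\<dots> = S powr r * (real (Suc i) * Wv i powr (- r))"
      proof -
        have e1: "(S / Wv i) powr r = S powr r / Wv i powr r" using Spos Wv0[of i] by (simp add: powr_divide)
        have e2: "Wv i powr (- r) = inverse (Wv i powr r)" by (rule powr_minus)
        show ?thesis unfolding e1 e2 by (simp only: divide_inverse mult_ac)
      qed
      also have "\<dots> \<le> S powr r * M"
        using M[of "Suc i"] i unfolding Wv_def by (intro mult_left_mono) auto
      finally show ?thesis .
    qed
    have "(\<Sum>j<n. b j powr r) \<le> (\<Sum>j<n. \<Sum>i<n. lam i * y i j powr r)"
      by (intro sum_mono jen) auto
    also have "\<dots> = (\<Sum>i<n. lam i * (\<Sum>j<n. y i j powr r))"
      by (subst sum.swap) (simp add: sum_distrib_left)
    also have "\<dots> \<le> (\<Sum>i<n. lam i * (S powr r * M))"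
      by (intro sum_mono mult_left_mono ysum lam0) auto
    also have "\<dots> = (\<Sum>i<n. lam i) * (S powr r * M)" by (simp add: sum_distrib_right)
    also have "\<dots> \<le> 1 * (S powr r * M)"
      using lam1 M0 by (intro mult_right_mono) auto
    finally show ?thesis by simp
  qed
qed



lemma lor_main:
  assumes p: "1 \<le> p" and q: "1 \<le> q" and nu: "modulus_of_variation \<nu>" and w: "weight_sequence w"
    and MoK: "\<And>n. 1 \<le> n \<Longrightarrow> Max ((\<lambda>k. real k powr (1 / p) * (\<Sum>j<k. w j) powr (- 1 / q)) ` {1..n}) \<le> K * \<nu> n"
    and x: "in_lorentz w q x" and n: "1 \<le> n"
  shows "mseq_term \<nu> p x n \<le> (if 1 \<le> p / q then 1 else 1 / (1 - p / q)) powr (1 / p) * K * lorentz_norm w q x"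
proof -
  let ?f = "\<lambda>k. real k powr (1 / p) * (\<Sum>j<k. w j) powr (- 1 / q)"
  let ?Mo = "Max (?f ` {1..n})"
  define r where "r = p / q"
  define Cr where "Cr = (if 1 \<le> r then 1 else 1 / (1 - r))"
  have r0: "0 < r" unfolding r_def using p q by simp
  have Cr0: "0 < Cr" unfolding Cr_def by auto
  have wpos: "\<And>j. 0 < w j" and wdec: "decseq w" using w by (auto simp: weight_sequence_def)
  have fk: "?f k \<le> ?Mo" if "k \<in> {1..n}" for k using that by (intro Max_ge) auto
  have f0: "0 \<le> ?f k" for k by simp
  have f1: "?f 1 \<le> ?Mo" by (rule fk) (use n in simp)
  have Mo0: "0 \<le> ?Mo" by (rule order_trans[OF f0[of 1] f1])
  have nupos: "0 < \<nu> n" using nu n by (auto simp: modulus_of_variation_def)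
  have bd: "bounded (range x)" and sm: "summable (\<lambda>j. decr_rearr x j powr q * w j)"
    using x by (auto simp: in_lorentz_def)
  define S where "S = (\<Sum>j. decr_rearr x j powr q * w j)"
  define b where "b j = decr_rearr x j powr q" for j
  have b0: "0 \<le> b j" for j unfolding b_def by simp
  have bdec: "b j \<le> b i" if "i \<le> j" for i j
    unfolding b_def using dr_antimono[OF bd that] dr_nonneg[OF bd, of j] q by (intro powr_mono2) auto
  have Sb: "(\<Sum>j<n. b j * w j) \<le> S"
    unfolding S_def b_def
  proof (rule sum_le_suminf[OF sm])
    show "0 \<le> decr_rearr x m powr q * w m" for m using wpos[of m] by simp
  qed simp
  have S0: "0 \<le> S" unfolding S_def using wpos by (intro suminf_nonneg sm mult_nonneg_nonneg) (auto intro: less_imp_le)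
  define M where "M = ?Mo powr p"
  have M: "real k * (\<Sum>j<k. w j) powr (- r) \<le> M" if k: "1 \<le> k" "k \<le> n" for k
  proof -
    have "?f k powr p \<le> M" unfolding M_def using fk[of k] k f0[of k] p by (intro powr_mono2) auto
    moreover have "?f k powr p = real k * (\<Sum>j<k. w j) powr (- r)"
    proof -
      have e: "- 1 / q * p = - r" unfolding r_def by simp
      have "?f k powr p = (real k powr (1 / p)) powr p * ((\<Sum>j<k. w j) powr (- 1 / q)) powr p"
        by (simp add: powr_mult)
      also have "\<dots> = real k powr (1 / p * p) * (\<Sum>j<k. w j) powr (- 1 / q * p)"
        by (simp only: powr_powr)
      also have "\<dots> = real k * (\<Sum>j<k. w j) powr (- r)" unfolding e using p by simp
      finally show ?thesis .
    qed
    ultimately show ?thesis by simp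
  qed
  have main: "(\<Sum>j<n. b j powr r) \<le> Cr * (S powr r * M)"
  proof (cases "1 \<le> r")
    case True
    have "(\<Sum>j<n. b j powr r) \<le> S powr r * M"
      by (rule lor_ge1[OF True wpos b0 bdec Sb n M])
    then show ?thesis using True by (simp add: Cr_def)
  next
    case False
    have "(\<Sum>j<n. b j powr r) \<le> S powr r * M / (1 - r)"
      by (rule lor_lt1[OF r0 _ wdec wpos b0 bdec Sb n M[OF n order_refl]]) (use False in simp)
    then show ?thesis using False by (simp add: Cr_def)
  qed
  have bp: "b j powr r = decr_rearr x j powr p" for j
  proof -
    have "b j powr r = decr_rearr x j powr (q * r)" unfolding b_def by (simp only: powr_powr)
    also have "q * r = p" unfolding r_def using q by simp
    finally show ?thesis .
  qed
  have S1: "(\<Sum>j<n. decr_rearr x j powr p) \<le> Cr * (S powr r * M)" using main by (simp add: bp)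
  have "(\<Sum>j<n. decr_rearr x j powr p) powr (1/p) \<le> (Cr * (S powr r * M)) powr (1/p)"
    using S1 p by (intro powr_mono2) (auto intro: sum_nonneg)
  also have "\<dots> = Cr powr (1/p) * S powr (1/q) * ?Mo"
  proof -
    have "(Cr * (S powr r * M)) powr (1/p) = Cr powr (1/p) * (S powr r) powr (1/p) * M powr (1/p)"
      using Cr0 S0 by (simp add: powr_mult)
    also have "(S powr r) powr (1/p) = S powr (1/q)"
      unfolding powr_powr r_def using p q by simp
    also have "M powr (1/p) = ?Mo" unfolding M_def powr_powr using p Mo0 by simp
    finally show ?thesis .
  qed
  also have "\<dots> \<le> Cr powr (1/p) * S powr (1/q) * (K * \<nu> n)"
    using MoK[OF n] by (intro mult_left_mono) auto
  finally have "(\<Sum>j<n. decr_rearr x j powr p) powr (1/p) \<le> (Cr powr (1/p) * K * S powr (1/q)) * \<nu> n"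
    by (simp add: mult_ac)
  then have "mseq_term \<nu> p x n \<le> Cr powr (1/p) * K * S powr (1/q)"
    unfolding mseq_term_def using nupos by (simp add: pos_divide_le_eq)
  then show ?thesis unfolding lorentz_norm_def S_def Cr_def r_def .
qed

lemma lor_suf:
  assumes p: "1 \<le> p" and q: "1 \<le> q" and nu: "modulus_of_variation \<nu>" and w: "weight_sequence w"
    and lim: "limsup (\<lambda>n. ereal (Max ((\<lambda>k. real k powr (1 / p) * (\<Sum>j<k. w j) powr (- 1 / q)) ` {1..n}) / \<nu> n)) < \<infinity>"
  shows "embeds (in_lorentz w q) (lorentz_norm w q) (in_marc \<nu> p) (marc_norm \<nu> p)"
proof -
  let ?Mo = "\<lambda>n. Max ((\<lambda>k. real k powr (1 / p) * (\<Sum>j<k. w j) powr (- 1 / q)) ` {1..n})"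
  obtain K0 where K0: "\<And>n. ?Mo n / \<nu> n \<le> K0" using limsup_finite_then_bounded[OF lim] by blast
  define K where "K = max K0 1"
  have MoK: "?Mo n \<le> K * \<nu> n" if "1 \<le> n" for n
  proof -
    have "0 < \<nu> n" using nu that by (auto simp: modulus_of_variation_def)
    moreover have "?Mo n / \<nu> n \<le> K" using K0[of n] by (simp add: K_def)
    ultimately show ?thesis by (simp add: pos_divide_le_eq)
  qed
  define D where "D = (if 1 \<le> p / q then 1 else 1 / (1 - p / q)) powr (1 / p) * K"
  show ?thesis unfolding embeds_def
  proof (intro exI[of _ D] allI impI conjI)
    fix x assume x: "in_lorentz w q x"
    have mb: "mseq_term \<nu> p x n \<le> D * lorentz_norm w q x" if "1 \<le> n" for n
      unfolding D_def by (rule lor_main[OF p q nu w MoK x that])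
    have bd: "bounded (range x)" using x by (simp add: in_lorentz_def)
    show "in_marc \<nu> p x" unfolding in_marc_def
      using bd mb by (auto simp: bdd_above_def)
    show "marc_norm \<nu> p x \<le> D * lorentz_norm w q x" by (intro marc_le mb)
  qed
qed


theorem corollary7p4:
  fixes p q :: real and \<nu> :: "nat \<Rightarrow> real" and \<phi> :: "real \<Rightarrow> real" and w :: "nat \<Rightarrow> real"
  assumes "1 \<le> p" and "1 \<le> q"
    and "modulus_of_variation \<nu>" and "orlicz_function \<phi>" and "weight_sequence w"
  shows "(embeds (in_orlicz \<phi>) (orlicz_norm \<phi>) (in_marc \<nu> p) (marc_norm \<nu> p) \<longleftrightarrow>
           limsup (\<lambda>n. ereal (Max ((\<lambda>k. real k powr (1 / p) * orlicz_inv \<phi> (1 / real k)) ` {1..n}) / \<nu> n)) < \<infinity>)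
       \<and> (embeds (in_lorentz w q) (lorentz_norm w q) (in_marc \<nu> p) (marc_norm \<nu> p) \<longleftrightarrow>
           limsup (\<lambda>n. ereal (Max ((\<lambda>k. real k powr (1 / p) * (\<Sum>j<k. w j) powr (- 1 / q)) ` {1..n}) / \<nu> n)) < \<infinity>)"
proof (intro conjI)
  show "embeds (in_orlicz \<phi>) (orlicz_norm \<phi>) (in_marc \<nu> p) (marc_norm \<nu> p) \<longleftrightarrow>
           limsup (\<lambda>n. ereal (Max ((\<lambda>k. real k powr (1 / p) * orlicz_inv \<phi> (1 / real k)) ` {1..n}) / \<nu> n)) < \<infinity>"
    using orl_nec[OF assms(4,1,3)] orl_suf[OF assms(4,1,3)] by blast
  show "embeds (in_lorentz w q) (lorentz_norm w q) (in_marc \<nu> p) (marc_norm \<nu> p) \<longleftrightarrow>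
           limsup (\<lambda>n. ereal (Max ((\<lambda>k. real k powr (1 / p) * (\<Sum>j<k. w j) powr (- 1 / q)) ` {1..n}) / \<nu> n)) < \<infinity>"
    using lor_nec[OF assms(1,2,3,5)] lor_suf[OF assms(1,2,3,5)] by blast
qed

end
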